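(* Let $K=\operatorname{cone}\{e_1,\dots,e_m\}\subset\mathbb{R}^m$ be a simplicial cone and $L$ a proper cone such that $K$ is an $L$-isotone projection set. Then there exists $\varepsilon\in\mathcal{E}$ such that $K_\varepsilon$ is subdual, $K_\varepsilon$ is an $L$-isotone projection set, and $K_\varepsilon\subset L\subset K_\varepsilon^*$.
   Context: $\mathbb{R}^m$ carries the standard inner product. $\operatorname{cone}\{x_1,\dots,x_m\}=\{\sum t^ix_i:t^i\ge0\}$; it is a simplicial cone when $x_1,\dots,x_m$ are linearly independent. $\mathcal{E}=\{\varepsilon=(\varepsilon^1,\dots,\varepsilon^m)\in\mathbb{R}^m:|\varepsilon^i|=1\}$ and $K_\varepsilon=\operatorname{cone}\{\varepsilon^1e_1,\dots,\varepsilon^me_m\}$. A proper cone is a closed convex cone that is pointed and generating ($K-K=\mathbb{R}^m$). The dual cone is $K^*=\{y:\langle x,y\rangle\ge0\ \forall x\in K\}$; $K$ is subdual if $K\subset K^*$. For a cone $L$, $x\le_L y$ means $y-x\in L$; a closed convex set $D$ is an $L$-isotone projection set if $x\le_L y$ implies $P_Dx\le_L P_Dy$, where $P_D$ is the metric projection onto $D$. *)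

theory Defs
  imports "HOL-Analysis.Analysis"
begin

definition gen_cone :: "('m::finite \<Rightarrow> real ^ 'n) \<Rightarrow> (real ^ 'n) set" where
  "gen_cone x = {y. \<exists>t. (\<forall>i. t i \<ge> 0) \<and> y = (\<Sum>i\<in>UNIV. t i *\<^sub>R x i)}"

definition sign_vectors :: "(real ^ 'm::finite) set" where
  "sign_vectors = {\<epsilon>. \<forall>i. \<bar>\<epsilon> $ i\<bar> = 1}"

definition K_eps :: "real ^ 'm::finite \<Rightarrow> (real ^ 'm) set" where
  "K_eps \<epsilon> = gen_cone (\<lambda>i. (\<epsilon> $ i) *\<^sub>R axis i 1)"

definition proper_cone :: "(real ^ 'm::finite) set \<Rightarrow> bool" where
  "proper_cone L \<longleftrightarrow> closed L \<and> convex L \<and> cone L \<and>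
     L \<inter> uminus ` L = {0} \<and> {x - y | x y. x \<in> L \<and> y \<in> L} = UNIV"

definition dual_cone :: "(real ^ 'm::finite) set \<Rightarrow> (real ^ 'm) set" where
  "dual_cone K = {y. \<forall>x\<in>K. inner x y \<ge> 0}"

definition subdual :: "(real ^ 'm::finite) set \<Rightarrow> bool" where
  "subdual K \<longleftrightarrow> K \<subseteq> dual_cone K"

definition cone_le :: "(real ^ 'm::finite) set \<Rightarrow> real ^ 'm \<Rightarrow> real ^ 'm \<Rightarrow> bool" where
  "cone_le L x y \<longleftrightarrow> y - x \<in> L"

text \<open>D is an L-isotone projection set: D closed convex (nonempty, so that P_D is defined)
  and the metric projection closest_point D is monotone w.r.t. <=_L.\<close>
definition isotone_projection_set :: "(real ^ 'm::finite) set \<Rightarrow> (real ^ 'm) set \<Rightarrow> bool" where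
  "isotone_projection_set L D \<longleftrightarrow> closed D \<and> convex D \<and> D \<noteq> {} \<and>
     (\<forall>x y. cone_le L x y \<longrightarrow> cone_le L (closest_point D x) (closest_point D y))"

end

theory Submission
  imports Defs
begin

definition orth :: "real ^ 'm::finite \<Rightarrow> (real ^ 'm) set" where
  "orth e = {x. \<forall>i. 0 \<le> e$i * x$i}"

lemma sign_cases: assumes "(e::real^'m::finite) \<in> sign_vectors" shows "e$i = 1 \<or> e$i = -1"
proof -
  have "\<bar>e$i\<bar> = 1" using assms unfolding sign_vectors_def by blast
  then show ?thesis by linarith
qed

lemma K_eps_eq:
  fixes e :: "real^'m::finite"
  assumes e: "e \<in> sign_vectors"
  shows "K_eps e = orth e"
proof
  show "K_eps e \<subseteq> orth e"
  proof
    fix x assume "x \<in> K_eps e"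
    then obtain t where t: "\<forall>i. t i \<ge> 0" "x = (\<Sum>i\<in>UNIV. t i *\<^sub>R ((e$i) *\<^sub>R axis i 1))"
      unfolding K_eps_def gen_cone_def by auto
    have xj: "x$j = t j * e$j" for j
      using t(2) by (simp add: sum_component axis_def if_distrib cong: if_cong)
    have ee: "e$j * e$j = 1" for j using sign_cases[OF e, of j] by auto
    show "x \<in> orth e"
    proof (simp only: orth_def mem_Collect_eq, intro allI)
      fix i
      have "e$i * x$i = t i * (e$i * e$i)" using xj[of i] by (simp add: algebra_simps)
      also have "\<dots> = t i" using ee[of i] by simp
      finally show "0 \<le> e$i * x$i" using t(1) by simp
    qed
  qed
next
  show "orth e \<subseteq> K_eps e"
  proof
    fix x assume x: "x \<in> orth e"
    have "x = (\<Sum>i\<in>UNIV. (e$i * x$i) *\<^sub>R ((e$i) *\<^sub>R axis i 1))"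
    proof (subst vec_eq_iff, intro allI)
      fix j
      have "e$j * e$j = 1" using sign_cases[OF e, of j] by auto
      have "(\<Sum>i\<in>UNIV. (e$i * x$i) *\<^sub>R ((e$i) *\<^sub>R axis i (1::real))) $ j = (e$j * x$j) * e$j"
        by (simp add: axis_def if_distrib cong: if_cong)
      also have "\<dots> = x$j * (e$j * e$j)" by (simp only: ac_simps)
      also have "\<dots> = x$j" using \<open>e$j * e$j = 1\<close> by simp
      finally show "x$j = (\<Sum>i\<in>UNIV. (e$i * x$i) *\<^sub>R ((e$i) *\<^sub>R axis i 1)) $ j" by simp
    qed
    moreover have "\<forall>i. 0 \<le> e$i * x$i" using x unfolding orth_def by blast
    ultimately show "x \<in> K_eps e" unfolding K_eps_def gen_cone_def
      by (intro CollectI exI[of _ "\<lambda>i. e$i * x$i"]) simp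
  qed
qed

lemma orth_convex: "convex (orth (e::real^'m::finite))"
proof (rule convexI)
  fix x y :: "real^'m" and u v :: real
  assume x: "x \<in> orth e" and y: "y \<in> orth e" and u: "0 \<le> u" and v: "0 \<le> v"
  show "u *\<^sub>R x + v *\<^sub>R y \<in> orth e" unfolding orth_def
  proof (intro CollectI allI)
    fix i
    have "0 \<le> e$i * x$i" "0 \<le> e$i * y$i" using x y unfolding orth_def by auto
    then have "0 \<le> u * (e$i * x$i) + v * (e$i * y$i)" using u v by simp
    then show "0 \<le> e$i * (u *\<^sub>R x + v *\<^sub>R y)$i" by (simp add: algebra_simps)
  qed
qed

lemma orth_closed: "closed (orth (e::real^'m::finite))"
  unfolding orth_def
  by (intro closed_Collect_all closed_Collect_le continuous_intros)

lemma orth_cp: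
  fixes e :: "real^'m::finite"
  assumes e: "e \<in> sign_vectors"
  shows "closest_point (orth e) x = (\<chi> i. e$i * max 0 (e$i * x$i))"
proof -
  define p where "p = (\<chi> i. e$i * max 0 (e$i * x$i))"
  have ee: "e$j * e$j = 1" for j using sign_cases[OF e, of j] by auto
  have "p \<in> orth e" unfolding orth_def p_def
  proof (intro CollectI allI)
    fix i
    have "e$i * (e$i * max 0 (e$i * x$i)) = (e$i * e$i) * max 0 (e$i * x$i)" by (simp only: ac_simps)
    also have "\<dots> = max 0 (e$i * x$i)" using ee[of i] by simp
    finally have h: "e$i * (e$i * max 0 (e$i * x$i)) = max 0 (e$i * x$i)" .
    show "0 \<le> e $ i * (\<chi> i. e $ i * max 0 (e $ i * x $ i)) $ i"
      unfolding vec_lambda_beta h by (rule max.cobounded1)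
  qed
  moreover have "\<forall>z\<in>orth e. dist x p \<le> dist x z"
  proof
    fix z assume z: "z \<in> orth e"
    show "dist x p \<le> dist x z" unfolding dist_vec_def
    proof (rule L2_set_mono)
      fix i
      have zi: "0 \<le> e$i * z$i" using z unfolding orth_def by auto
      show "dist (x$i) (p$i) \<le> dist (x$i) (z$i)"
        using sign_cases[OF e, of i] zi unfolding p_def dist_real_def
        by (auto simp: max_def)
    qed simp
  qed
  ultimately show ?thesis unfolding p_def[symmetric]
    using closest_point_unique[OF orth_convex orth_closed] by metis
qed

lemma orth_subdual:
  fixes e :: "real^'m::finite"
  assumes e: "e \<in> sign_vectors"
  shows "orth e \<subseteq> dual_cone (orth e)"
proof
  fix y assume y: "y \<in> orth e"
  show "y \<in> dual_cone (orth e)" unfolding dual_cone_def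
  proof (intro CollectI ballI)
    fix x assume x: "x \<in> orth e"
    have "0 \<le> x$i * y$i" for i
    proof -
      have "0 \<le> (e$i * x$i) * (e$i * y$i)" using x y unfolding orth_def by auto
      also have "\<dots> = (e$i * e$i) * (x$i * y$i)" by (simp only: ac_simps)
      also have "\<dots> = x$i * y$i" using sign_cases[OF e, of i] by auto
      finally show ?thesis .
    qed
    then show "0 \<le> inner x y" unfolding inner_vec_def by (simp add: sum_nonneg)
  qed
qed

lemma orth_isotone:
  fixes e :: "real^'m::finite"
  assumes e: "e \<in> sign_vectors"
  shows "isotone_projection_set (orth e) (orth e)"
  unfolding isotone_projection_set_def
proof (intro conjI allI impI)
  show "closed (orth e)" by (rule orth_closed)
  show "convex (orth e)" by (rule orth_convex)
  have "(0::real^'m) \<in> orth e" unfolding orth_def by simp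
  then show "orth e \<noteq> {}" by blast
  fix x y assume "cone_le (orth e) x y"
  then have xy: "0 \<le> e$i * (y$i - x$i)" for i unfolding cone_le_def orth_def by auto
  show "cone_le (orth e) (closest_point (orth e) x) (closest_point (orth e) y)"
    unfolding cone_le_def orth_cp[OF e] unfolding orth_def
  proof (intro CollectI allI)
    fix i
    show "0 \<le> e $ i * ((\<chi> i. e $ i * max 0 (e $ i * y $ i)) - (\<chi> i. e $ i * max 0 (e $ i * x $ i))) $ i"
    proof -
      have ee: "e$i * e$i = 1" using sign_cases[OF e, of i] by auto
      have "e$i * x$i \<le> e$i * y$i" using xy[of i] by (simp add: algebra_simps)
      then have m: "max 0 (e$i * x$i) \<le> max 0 (e$i * y$i)" by simp
      have "e $ i * ((\<chi> i. e $ i * max 0 (e $ i * y $ i)) - (\<chi> i. e $ i * max 0 (e $ i * x $ i))) $ i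
        = (e$i * e$i) * (max 0 (e$i * y$i) - max 0 (e$i * x$i))" by (simp add: algebra_simps)
      also have "\<dots> = max 0 (e$i * y$i) - max 0 (e$i * x$i)" using ee by simp
      finally show ?thesis using m by simp
    qed
  qed
qed

lemma cone_sum:
  fixes L :: "(real^'m::finite) set"
  assumes "convex L" "cone L" "0 \<in> L" "\<And>i. f i \<in> L" "finite F"
  shows "sum f F \<in> L"
  using assms(5)
proof (induction F rule: finite_induct)
  case empty then show ?case using assms(3) by simp
next
  case (insert a F)
  have "convex_cone L" using assms(1-3) unfolding convex_cone_def
    by (metis cone_def conic_def empty_iff)
  then show ?case using insert assms(4) by (simp add: convex_cone_add)
qed

theorem proposition2:
  fixes L :: "(real ^ 'm::finite) set"
  assumes "proper_cone L"
    and "isotone_projection_set L (gen_cone (\<lambda>i::'m. axis i (1::real)))"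
  shows "\<exists>\<epsilon>\<in>sign_vectors. subdual (K_eps \<epsilon>) \<and> isotone_projection_set L (K_eps \<epsilon>) \<and>
           K_eps \<epsilon> \<subseteq> L \<and> L \<subseteq> dual_cone (K_eps \<epsilon>)"
proof -
  have Lc: "closed L" "convex L" "cone L" and pt: "L \<inter> uminus ` L = {0}"
    and gen: "{x - y | x y. x \<in> L \<and> y \<in> L} = UNIV"
    using assms(1) unfolding proper_cone_def by auto
  have L0: "0 \<in> L" using pt by auto
  define one :: "real^'m" where "one = (\<chi> i. 1)"
  have one: "one \<in> sign_vectors" unfolding one_def sign_vectors_def by simp
  have K1: "gen_cone (\<lambda>i::'m. axis i (1::real)) = orth one"
    using K_eps_eq[OF one] unfolding K_eps_def one_def by simp
  have P: "closest_point (orth one) x = (\<chi> i. max 0 (x$i))" for x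
    using orth_cp[OF one, of x] unfolding one_def by simp
  have iso: "y - x \<in> L \<Longrightarrow> (\<chi> i. max 0 (y$i)) - (\<chi> i. max 0 (x$i)) \<in> L" for x y
    using assms(2) unfolding isotone_projection_set_def K1 cone_le_def P by blast
  have scale: "c \<ge> 0 \<Longrightarrow> v \<in> L \<Longrightarrow> c *\<^sub>R v \<in> L" for c v using Lc(3) unfolding cone_def by blast
  have key: "axis j (u$j) \<in> L" if u: "u \<in> L" for u j
  proof -
    define x :: "real^'m" where "x = (\<chi> i. if i = j then \<bar>u$i\<bar> else - \<bar>u$i\<bar>)"
    have "(\<chi> i. max 0 ((x + u)$i)) - (\<chi> i. max 0 (x$i)) \<in> L"
      using iso[where x=x and y="x+u"] u by (simp only: add_diff_cancel_left')
    moreover have "(\<chi> i. max 0 ((x + u)$i)) - (\<chi> i. max 0 (x$i)) = axis j (u$j)"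
      unfolding vec_eq_iff x_def axis_def by (auto simp: max_def)
    ultimately show ?thesis by simp
  qed
  have ax_ne: "axis j (a::real) \<noteq> 0" if "a \<noteq> 0" for j :: 'm and a
    using that unfolding vec_eq_iff axis_def by auto
  have notboth: "\<not> (axis j 1 \<in> L \<and> axis j (-1) \<in> L)" for j
  proof
    assume h: "axis j 1 \<in> L \<and> axis j (-1) \<in> L"
    have "axis j (1::real) = - axis j (-1)" unfolding vec_eq_iff axis_def by auto
    then have "axis j 1 \<in> L \<inter> uminus ` L" using h by auto
    then show False using pt ax_ne[of 1 j] by auto
  qed
  have sgnax: "axis j (sgn (u$j)) \<in> L" if "u \<in> L" "u$j \<noteq> 0" for u j
  proof -
    have "(1 / \<bar>u$j\<bar>) *\<^sub>R axis j (u$j) \<in> L" using scale key[OF that(1)] by simp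
    moreover have "(1 / \<bar>u$j\<bar>) *\<^sub>R axis j (u$j) = axis j (sgn (u$j))"
      unfolding vec_eq_iff axis_def using that(2) by (auto simp: sgn_real_def)
    ultimately show ?thesis by simp
  qed
  have exs: "\<exists>s. (s = 1 \<or> s = -1) \<and> axis j s \<in> L" for j
  proof -
    have "axis j (1::real) \<in> {x - y | x y. x \<in> L \<and> y \<in> L}" using gen by simp
    then obtain a b where ab: "axis j (1::real) = a - b" "a \<in> L" "b \<in> L" by blast
    have "(a - b)$j = (1::real)" unfolding ab(1)[symmetric] by (simp add: axis_def)
    then have "a$j \<noteq> 0 \<or> b$j \<noteq> 0" by auto
    then obtain u where u: "u \<in> L" "u$j \<noteq> 0" using ab by blast
    have "sgn (u$j) = 1 \<or> sgn (u$j) = -1" using u(2) by (auto simp: sgn_real_def)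
    then show ?thesis using sgnax[OF u] by blast
  qed
  define s where "s j = (SOME s. (s = 1 \<or> s = -1) \<and> axis j s \<in> L)" for j
  have s: "(s j = 1 \<or> s j = -1) \<and> axis j (s j) \<in> L" for j
    unfolding s_def using someI_ex[OF exs[of j]] .
  define \<epsilon> :: "real^'m" where "\<epsilon> = (\<chi> j. s j)"
  have "\<bar>s i\<bar> = 1" for i using s[of i] by auto
  then have eps: "\<epsilon> \<in> sign_vectors" unfolding sign_vectors_def \<epsilon>_def by simp
  have "L \<subseteq> orth \<epsilon>"
  proof
    fix u assume u: "u \<in> L"
    show "u \<in> orth \<epsilon>" unfolding orth_def
    proof (intro CollectI allI)
      fix j
      show "0 \<le> \<epsilon>$j * u$j"
      proof (rule ccontr)
        assume neg: "\<not> 0 \<le> \<epsilon>$j * u$j"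
        then have "u$j \<noteq> 0" by auto
        from sgnax[OF u this] have "axis j (sgn (u$j)) \<in> L" .
        moreover have "sgn (u$j) = - s j" using neg s[of j] unfolding \<epsilon>_def
          by (auto simp: sgn_real_def mult_less_0_iff)
        ultimately show False using s[of j] notboth[of j] by auto
      qed
    qed
  qed
  moreover have "orth \<epsilon> \<subseteq> L"
  proof
    fix x assume "x \<in> orth \<epsilon>"
    then have "x \<in> K_eps \<epsilon>" using K_eps_eq[OF eps] by simp
    then obtain t where t: "\<forall>i. t i \<ge> 0" "x = (\<Sum>i\<in>UNIV. t i *\<^sub>R ((\<epsilon>$i) *\<^sub>R axis i 1))"
      unfolding K_eps_def gen_cone_def by auto
    have ti: "t i *\<^sub>R ((\<epsilon>$i) *\<^sub>R axis i 1) \<in> L" for i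
    proof -
      have "(\<epsilon>$i) *\<^sub>R axis i (1::real) = axis i (s i)" unfolding \<epsilon>_def vec_eq_iff axis_def by auto
      then show ?thesis using scale[of "t i"] t(1) s[of i] by simp
    qed
    show "x \<in> L" unfolding t(2) by (rule cone_sum[OF Lc(2,3) L0 ti]) simp
  qed
  ultimately have LE: "L = K_eps \<epsilon>" using K_eps_eq[OF eps] by simp
  have LO: "L = orth \<epsilon>" using LE K_eps_eq[OF eps] by simp
  show ?thesis
  proof (rule bexI[OF _ eps])
    show "subdual (K_eps \<epsilon>) \<and> isotone_projection_set L (K_eps \<epsilon>) \<and>
           K_eps \<epsilon> \<subseteq> L \<and> L \<subseteq> dual_cone (K_eps \<epsilon>)"
      unfolding K_eps_eq[OF eps] LO subdual_def using orth_subdual[OF eps] orth_isotone[OF eps] by simp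
  qed
qed

end
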